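(* Every quasi-semi-simple group $(G,\tau)$ is topologically minimal: if $\tau'$ is a Hausdorff topology on $G$ making $G$ a topological group and $\tau'\subseteq\tau$, then $\tau'=\tau$.
   Context: A locally compact group $G$ is quasi-semi-simple (qss) if there is a closed subgroup $A<G$ such that (i) $G=CAC$ for some compact $C\subset G$; (ii) for every net $(a_\alpha)$ in $A$ converging to infinity there is a subnet $(a_\beta)$ such that $U^{(a_\beta)}_+$ is not precompact and the subgroup generated by $U^{(a_\beta)}_+,U^{(a_\beta)}_-,U^{(a_\beta)}_0$ is dense in $G$, where for a net $(g_\alpha)$: $U^{(g_\alpha)}_+=\{x: g_\alpha^{-1}xg_\alpha\to e\}$, $U^{(g_\alpha)}_-=\{x: g_\alpha xg_\alpha^{-1}\to e\}$, and $U^{(g_\alpha)}_0$ is the set of $x$ such that every subnet of each of the nets $(g_\alpha^{-1}xg_\alpha)$, $(g_\alpha xg_\alpha^{-1})$ admits a converging subnet. *)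

theory Defs
  imports "HOL-Analysis.Analysis" "HOL-Algebra.Generated_Groups"
begin

definition topological_group :: "('a, 'b) monoid_scheme \<Rightarrow> 'a topology \<Rightarrow> bool" where
  "topological_group G T \<longleftrightarrow> group G \<and> topspace T = carrier G \<and>
     continuous_map (prod_topology T T) T (\<lambda>p. fst p \<otimes>\<^bsub>G\<^esub> snd p) \<and>
     continuous_map T T (\<lambda>x. inv\<^bsub>G\<^esub> x)"

definition locally_compact_group :: "('a, 'b) monoid_scheme \<Rightarrow> 'a topology \<Rightarrow> bool" where
  "locally_compact_group G T \<longleftrightarrow> topological_group G T \<and> Hausdorff_space T \<and>
     locally_compact_space T"

text \<open>Nets are encoded by their tail filters: a net in a set S is a proper filter F
with S eventually; a subnet of F is a proper filter F' finer than F.\<close>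
definition net_in :: "'a set \<Rightarrow> 'a filter \<Rightarrow> bool" where
  "net_in S F \<longleftrightarrow> F \<noteq> bot \<and> eventually (\<lambda>x. x \<in> S) F"

definition subnet :: "'a filter \<Rightarrow> 'a filter \<Rightarrow> bool" where
  "subnet F' F \<longleftrightarrow> F' \<noteq> bot \<and> F' \<le> F"

definition tends_to_infinity :: "'a topology \<Rightarrow> 'a filter \<Rightarrow> bool" where
  "tends_to_infinity T F \<longleftrightarrow> (\<forall>K. compactin T K \<longrightarrow> eventually (\<lambda>x. x \<notin> K) F)"

definition precompact :: "'a topology \<Rightarrow> 'a set \<Rightarrow> bool" where
  "precompact T S \<longleftrightarrow> compactin T (T closure_of S)"

definition subnets_have_conv_subnets :: "'a topology \<Rightarrow> 'a filter \<Rightarrow> bool" where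
  "subnets_have_conv_subnets T F \<longleftrightarrow>
     (\<forall>H. subnet H F \<longrightarrow> (\<exists>H' l. subnet H' H \<and> limitin T (\<lambda>y. y) l H'))"

definition U_plus :: "('a, 'b) monoid_scheme \<Rightarrow> 'a topology \<Rightarrow> 'a filter \<Rightarrow> 'a set" where
  "U_plus G T F = {x \<in> carrier G.
      limitin T (\<lambda>g. inv\<^bsub>G\<^esub> g \<otimes>\<^bsub>G\<^esub> x \<otimes>\<^bsub>G\<^esub> g) \<one>\<^bsub>G\<^esub> F}"

definition U_minus :: "('a, 'b) monoid_scheme \<Rightarrow> 'a topology \<Rightarrow> 'a filter \<Rightarrow> 'a set" where
  "U_minus G T F = {x \<in> carrier G.
      limitin T (\<lambda>g. g \<otimes>\<^bsub>G\<^esub> x \<otimes>\<^bsub>G\<^esub> inv\<^bsub>G\<^esub> g) \<one>\<^bsub>G\<^esub> F}"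

definition U_zero :: "('a, 'b) monoid_scheme \<Rightarrow> 'a topology \<Rightarrow> 'a filter \<Rightarrow> 'a set" where
  "U_zero G T F = {x \<in> carrier G.
      subnets_have_conv_subnets T (filtermap (\<lambda>g. inv\<^bsub>G\<^esub> g \<otimes>\<^bsub>G\<^esub> x \<otimes>\<^bsub>G\<^esub> g) F) \<and>
      subnets_have_conv_subnets T (filtermap (\<lambda>g. g \<otimes>\<^bsub>G\<^esub> x \<otimes>\<^bsub>G\<^esub> inv\<^bsub>G\<^esub> g) F)}"

definition quasi_semi_simple :: "('a, 'b) monoid_scheme \<Rightarrow> 'a topology \<Rightarrow> bool" where
  "quasi_semi_simple G T \<longleftrightarrow> locally_compact_group G T \<and>
     (\<exists>A. subgroup A G \<and> closedin T A \<and>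
        (\<exists>C. compactin T C \<and>
           carrier G = {c \<otimes>\<^bsub>G\<^esub> a \<otimes>\<^bsub>G\<^esub> c' | c a c'. c \<in> C \<and> a \<in> A \<and> c' \<in> C}) \<and>
        (\<forall>F. net_in A F \<and> tends_to_infinity T F \<longrightarrow>
           (\<exists>F'. subnet F' F \<and> \<not> precompact T (U_plus G T F') \<and>
              T closure_of (generate G (U_plus G T F' \<union> U_minus G T F' \<union> U_zero G T F'))
                = carrier G)))"

end

theory Submission
  imports Defs
begin

lemma cluster_point:
  assumes K: "compactin X K" and F: "F \<noteq> bot" and ev: "eventually (\<lambda>x. f x \<in> K) F"
  shows "\<exists>y\<in>K. \<forall>U. openin X U \<and> y \<in> U \<longrightarrow> (\<forall>E. eventually E F \<longrightarrow> (\<exists>x. E x \<and> f x \<in> U))"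
proof (rule ccontr)
  assume "\<not> ?thesis"
  then have "\<forall>y\<in>K. \<exists>UE. openin X (fst UE) \<and> y \<in> fst UE \<and> eventually (snd UE) F \<and> (\<forall>x. snd UE x \<longrightarrow> f x \<notin> fst UE)"
    by fastforce
  then obtain UE where UE: "\<And>y. y \<in> K \<Longrightarrow> openin X (fst (UE y)) \<and> y \<in> fst (UE y) \<and> eventually (snd (UE y)) F \<and> (\<forall>x. snd (UE y) x \<longrightarrow> f x \<notin> fst (UE y))"
    by metis
  have "K \<subseteq> \<Union> ((\<lambda>y. fst (UE y)) ` K)" using UE by blast
  then obtain \<F> where \<F>: "finite \<F>" "\<F> \<subseteq> (\<lambda>y. fst (UE y)) ` K" "K \<subseteq> \<Union>\<F>"
    using K UE unfolding compactin_def by (metis (no_types, lifting) imageE)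
  then obtain K0 where K0: "K0 \<subseteq> K" "finite K0" "\<F> = (\<lambda>y. fst (UE y)) ` K0"
    by (meson finite_subset_image)
  have "eventually (\<lambda>x. \<forall>y\<in>K0. snd (UE y) x) F"
    using K0 UE by (intro eventually_ball_finite) auto
  then have "eventually (\<lambda>x. False) F"
    using ev
  proof (rule eventually_elim2)
    fix x assume 1: "\<forall>y\<in>K0. snd (UE y) x" and 2: "f x \<in> K"
    then obtain y where "y \<in> K0" "f x \<in> fst (UE y)" using \<F> K0 by blast
    then show False using 1 UE K0 by blast
  qed
  then show False using F by simp
qed

lemma cluster_subnet:
  assumes K: "compactin X K" and F: "F \<noteq> bot" and ev: "eventually (\<lambda>x. f x \<in> K) F"
  shows "\<exists>y\<in>K. \<exists>H. H \<noteq> bot \<and> H \<le> F \<and> limitin X f y H"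
proof -
  from cluster_point[OF assms] obtain y where y: "y \<in> K" and
    cl: "\<forall>U. openin X U \<and> y \<in> U \<longrightarrow> (\<forall>E. eventually E F \<longrightarrow> (\<exists>x. E x \<and> f x \<in> U))"
    by (rule bexE)
  have yX: "y \<in> topspace X" using compactin_subset_topspace[OF K] y by (rule subsetD)
  define H where "H = inf F (filtercomap f (nhdsin X y))"
  have "H \<noteq> bot"
  proof
    assume "H = bot"
    then have "eventually (\<lambda>x. False) H" by simp
    then have "\<exists>Q R. eventually Q F \<and> eventually R (filtercomap f (nhdsin X y)) \<and> (\<forall>x. Q x \<and> R x \<longrightarrow> False)"
      unfolding H_def eventually_inf .
    then obtain Q R where Q: "eventually Q F" and R: "eventually R (filtercomap f (nhdsin X y))"
      and QR: "\<forall>x. Q x \<and> R x \<longrightarrow> False"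
      by (elim exE conjE)
    from R obtain P where P: "eventually P (nhdsin X y)" and PR: "\<forall>x. P (f x) \<longrightarrow> R x"
      unfolding eventually_filtercomap by (elim exE conjE)
    from P yX obtain S where S: "openin X S" "y \<in> S" "\<forall>z\<in>S. P z"
      unfolding eventually_nhdsin by (elim disjE exE conjE) simp_all
    from cl S(1,2) Q obtain x where "Q x" "f x \<in> S" by (elim allE impE) auto
    then show False using QR PR S(3) by blast
  qed
  moreover have "limitin X f y H"
    unfolding limitin_def
  proof (intro conjI allI impI)
    show "y \<in> topspace X" by (fact yX)
    fix V assume V: "openin X V \<and> y \<in> V"
    have "eventually (\<lambda>z. z \<in> V) (nhdsin X y)"
      unfolding eventually_nhdsin using V by (intro disjI2 exI[of _ V]) simp
    then have "eventually (\<lambda>x. f x \<in> V) (filtercomap f (nhdsin X y))"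
      unfolding eventually_filtercomap by (intro exI[of _ "\<lambda>z. z \<in> V"]) simp
    then show "eventually (\<lambda>x. f x \<in> V) H"
      unfolding H_def by (rule filter_leD[rotated]) (rule inf_le2)
  qed
  moreover have "H \<le> F" unfolding H_def by (rule inf_le1)
  ultimately show ?thesis using y by blast
qed

lemma limitin_mono_filter: "F' \<le> F \<Longrightarrow> limitin X f l F \<Longrightarrow> limitin X f l F'"
  unfolding limitin_def using filter_leD by blast

lemma limitin_coarser:
  assumes "\<forall>U. openin T' U \<longrightarrow> openin T U" "topspace T' = topspace T" "limitin T f l F"
  shows "limitin T' f l F"
  using assms unfolding limitin_def by auto

lemma limitin_mult:
  assumes "topological_group G T" "limitin T f a F" "limitin T g b F"
  shows "limitin T (\<lambda>x. f x \<otimes>\<^bsub>G\<^esub> g x) (a \<otimes>\<^bsub>G\<^esub> b) F"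
proof -
  have "limitin (prod_topology T T) (\<lambda>x. (f x, g x)) (a, b) F"
    using assms by (simp add: limitin_pairwise o_def)
  from continuous_map_limit[OF _ this, of T "\<lambda>p. fst p \<otimes>\<^bsub>G\<^esub> snd p"] assms(1)
  show ?thesis unfolding topological_group_def by (simp add: o_def)
qed

lemma limitin_inv:
  assumes "topological_group G T" "limitin T f a F"
  shows "limitin T (\<lambda>x. inv\<^bsub>G\<^esub> f x) (inv\<^bsub>G\<^esub> a) F"
  using continuous_map_limit[OF _ assms(2), of T "\<lambda>x. inv\<^bsub>G\<^esub> x"] assms(1)
  unfolding topological_group_def by (simp add: o_def)

lemma grp_alg1:
  assumes "group G" "c \<in> carrier G" "a \<in> carrier G" "d \<in> carrier G"
  shows "inv\<^bsub>G\<^esub> c \<otimes>\<^bsub>G\<^esub> (c \<otimes>\<^bsub>G\<^esub> a \<otimes>\<^bsub>G\<^esub> d) \<otimes>\<^bsub>G\<^esub> inv\<^bsub>G\<^esub> d = a"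
proof -
  interpret group G by fact
  show ?thesis using assms by (simp add: m_assoc[symmetric] ) (simp add: m_assoc)
qed

lemma grp_alg2:
  assumes "group G" "h \<in> carrier G" "y \<in> carrier G" "inv\<^bsub>G\<^esub> h \<otimes>\<^bsub>G\<^esub> y \<otimes>\<^bsub>G\<^esub> h = \<one>\<^bsub>G\<^esub>"
  shows "y = \<one>\<^bsub>G\<^esub>"
proof -
  interpret group G by fact
  have e: "inv\<^bsub>G\<^esub> h \<otimes>\<^bsub>G\<^esub> (y \<otimes>\<^bsub>G\<^esub> h) = inv\<^bsub>G\<^esub> h \<otimes>\<^bsub>G\<^esub> h"
    using assms by (simp add: m_assoc)
  have "y \<otimes>\<^bsub>G\<^esub> h = h"
    by (metis Units_eq Units_l_cancel e inv_closed m_closed assms(2,3))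
  then show ?thesis using assms by simp
qed

theorem theorem5p3:
  fixes G :: "('a, 'b) monoid_scheme" and \<tau> \<tau>' :: "'a topology"
  assumes "quasi_semi_simple G \<tau>"
    and "topological_group G \<tau>'"
    and "Hausdorff_space \<tau>'"
    and "\<forall>U. openin \<tau>' U \<longrightarrow> openin \<tau> U"
  shows "\<tau>' = \<tau>"
proof -
  have q: "locally_compact_group G \<tau> \<and>
     (\<exists>A. subgroup A G \<and> closedin \<tau> A \<and>
        (\<exists>C. compactin \<tau> C \<and>
           carrier G = {c \<otimes>\<^bsub>G\<^esub> a \<otimes>\<^bsub>G\<^esub> c' | c a c'. c \<in> C \<and> a \<in> A \<and> c' \<in> C}) \<and>
        (\<forall>F. net_in A F \<and> tends_to_infinity \<tau> F \<longrightarrow>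
           (\<exists>F'. subnet F' F \<and> \<not> precompact \<tau> (U_plus G \<tau> F') \<and>
              \<tau> closure_of (generate G (U_plus G \<tau> F' \<union> U_minus G \<tau> F' \<union> U_zero G \<tau> F'))
                = carrier G)))"
    using assms(1) unfolding quasi_semi_simple_def .
  have lcg: "locally_compact_group G \<tau>" using q by (rule conjunct1)
  from q[THEN conjunct2] obtain A where Aall: "subgroup A G \<and> closedin \<tau> A \<and>
        (\<exists>C. compactin \<tau> C \<and>
           carrier G = {c \<otimes>\<^bsub>G\<^esub> a \<otimes>\<^bsub>G\<^esub> c' | c a c'. c \<in> C \<and> a \<in> A \<and> c' \<in> C}) \<and>
        (\<forall>F. net_in A F \<and> tends_to_infinity \<tau> F \<longrightarrow>
           (\<exists>F'. subnet F' F \<and> \<not> precompact \<tau> (U_plus G \<tau> F') \<and>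
              \<tau> closure_of (generate G (U_plus G \<tau> F' \<union> U_minus G \<tau> F' \<union> U_zero G \<tau> F'))
                = carrier G))" ..
  have A: "subgroup A G" using Aall by (rule conjunct1)
  note rest = Aall[THEN conjunct2, THEN conjunct2, THEN conjunct1]
  note qss0 = Aall[THEN conjunct2, THEN conjunct2, THEN conjunct2]
  from rest obtain C where Call: "compactin \<tau> C \<and>
           carrier G = {c \<otimes>\<^bsub>G\<^esub> a \<otimes>\<^bsub>G\<^esub> c' | c a c'. c \<in> C \<and> a \<in> A \<and> c' \<in> C}" ..
  have C: "compactin \<tau> C" using Call by (rule conjunct1)
  have dec: "carrier G = {c \<otimes>\<^bsub>G\<^esub> a \<otimes>\<^bsub>G\<^esub> c' | c a c'. c \<in> C \<and> a \<in> A \<and> c' \<in> C}"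
    using Call by (rule conjunct2)
  have qss: "\<forall>F. net_in A F \<and> tends_to_infinity \<tau> F \<longrightarrow>
           (\<exists>F'. subnet F' F \<and> \<not> precompact \<tau> (U_plus G \<tau> F'))"
  proof (intro allI impI)
    fix F assume "net_in A F \<and> tends_to_infinity \<tau> F"
    with qss0 obtain F' where "subnet F' F" "\<not> precompact \<tau> (U_plus G \<tau> F')" by blast
    then show "\<exists>F'. subnet F' F \<and> \<not> precompact \<tau> (U_plus G \<tau> F')" by blast
  qed
  have tg: "topological_group G \<tau>" and Haus: "Hausdorff_space \<tau>"
    using lcg unfolding locally_compact_group_def by auto
  have grp: "group G" and ts: "topspace \<tau> = carrier G"
    and multc: "continuous_map (prod_topology \<tau> \<tau>) \<tau> (\<lambda>p. fst p \<otimes>\<^bsub>G\<^esub> snd p)"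
    using tg unfolding topological_group_def by auto
  have ts': "topspace \<tau>' = carrier G" using assms(2) unfolding topological_group_def by auto
  have coarse: "\<And>f l F. limitin \<tau> f l F \<Longrightarrow> limitin \<tau>' f l F"
    using limitin_coarser[OF assms(4)] ts ts' by auto
  interpret group G by (fact grp)
  have AG: "A \<subseteq> carrier G" using A subgroup.subset by blast
  have CG: "C \<subseteq> carrier G" using C compactin_subset_topspace ts by blast
  show ?thesis
    unfolding topology_eq
  proof (intro allI iffI)
    fix U assume "openin \<tau>' U" then show "openin \<tau> U" using assms(4) by blast
  next
    fix U assume U: "openin \<tau> U"
    show "openin \<tau>' U"
      unfolding openin_subopen[of \<tau>' U]
    proof (rule ballI, rule ccontr)
      fix x assume xU: "x \<in> U" and nope: "\<not> (\<exists>V. openin \<tau>' V \<and> x \<in> V \<and> V \<subseteq> U)"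
      have xG: "x \<in> carrier G" using U xU openin_subset ts by blast
      define F0 where "F0 = inf (nhdsin \<tau>' x) (principal (carrier G - U))"
      have F0ne: "F0 \<noteq> bot"
      proof
        assume "F0 = bot"
        then have "eventually (\<lambda>y. False) F0" by simp
        then obtain V where V: "openin \<tau>' V" "x \<in> V" "\<forall>y\<in>V. y \<in> carrier G - U \<longrightarrow> False"
          unfolding F0_def eventually_inf_principal eventually_nhdsin using xG ts' by auto
        have "V \<subseteq> carrier G" using V(1) openin_subset ts' by blast
        then have "V \<subseteq> U" using V(3) by blast
        then show False using nope V by blast
      qed
      have F0car: "eventually (\<lambda>y. y \<in> carrier G) F0"
        unfolding F0_def eventually_inf_principal by simp
      have F0notU: "eventually (\<lambda>y. y \<notin> U) F0"
        unfolding F0_def eventually_inf_principal by simp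
      have F0lim: "limitin \<tau>' (\<lambda>y. y) x F0"
        unfolding limitin_def
      proof (intro conjI allI impI)
        show "x \<in> topspace \<tau>'" using xG ts' by simp
        fix V assume V: "openin \<tau>' V \<and> x \<in> V"
        have "eventually (\<lambda>y. y \<in> V) (nhdsin \<tau>' x)"
          unfolding eventually_nhdsin using V by blast
        then show "eventually (\<lambda>y. y \<in> V) F0"
          unfolding F0_def by (rule filter_leD[rotated]) simp
      qed
      have inf: "\<And>K. compactin \<tau> K \<Longrightarrow> eventually (\<lambda>y. y \<notin> K) F0"
      proof -
        fix K assume K: "compactin \<tau> K"
        show "eventually (\<lambda>y. y \<notin> K) F0"
        proof (rule ccontr)
          assume nev: "\<not> eventually (\<lambda>y. y \<notin> K) F0"
          define F1 where "F1 = inf F0 (principal K)"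
          have F1ne: "F1 \<noteq> bot"
          proof
            assume "F1 = bot"
            then have "eventually (\<lambda>y. False) F1" by simp
            then show False using nev unfolding F1_def eventually_inf_principal by simp
          qed
          have "eventually (\<lambda>y. y \<in> K) F1" by (simp add: F1_def eventually_inf_principal)
          from cluster_subnet[OF K F1ne this] obtain y H where
            y: "y \<in> K" and H: "H \<noteq> bot" "H \<le> F1" and Hl: "limitin \<tau> (\<lambda>y. y) y H"
            by auto
          have HF0: "H \<le> F0" using H(2) unfolding F1_def by (meson inf.boundedE)
          have "limitin \<tau>' (\<lambda>y. y) x H" using limitin_mono_filter[OF HF0 F0lim] .
          moreover have "limitin \<tau>' (\<lambda>y. y) y H" using coarse[OF Hl] .
          ultimately have "y = x" using limitin_Hausdorff_unique[of \<tau>' "\<lambda>y. y" y H x] assms(3) H(1) by blast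
          then have "eventually (\<lambda>z. z \<in> U) H" using Hl U xU limitinD by fastforce
          moreover have "eventually (\<lambda>z. z \<notin> U) H" using filter_leD[OF HF0 F0notU] .
          ultimately have "eventually (\<lambda>z. False) H" by (rule eventually_elim2) auto
          then show False using H(1) by simp
        qed
      qed
      have "\<forall>g\<in>carrier G. \<exists>t. fst t \<in> C \<and> fst (snd t) \<in> A \<and> snd (snd t) \<in> C \<and>
               g = fst t \<otimes>\<^bsub>G\<^esub> fst (snd t) \<otimes>\<^bsub>G\<^esub> snd (snd t)"
      proof
        fix g assume "g \<in> carrier G"
        then obtain c a c' where "c \<in> C" "a \<in> A" "c' \<in> C" "g = c \<otimes>\<^bsub>G\<^esub> a \<otimes>\<^bsub>G\<^esub> c'"
          using dec by blast
        then show "\<exists>t. fst t \<in> C \<and> fst (snd t) \<in> A \<and> snd (snd t) \<in> C \<and>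
               g = fst t \<otimes>\<^bsub>G\<^esub> fst (snd t) \<otimes>\<^bsub>G\<^esub> snd (snd t)"
          by (intro exI[of _ "(c, a, c')"]) simp
      qed
      then have "\<exists>\<phi>. \<forall>g\<in>carrier G. fst (\<phi> g) \<in> C \<and> fst (snd (\<phi> g)) \<in> A \<and> snd (snd (\<phi> g)) \<in> C \<and>
               g = fst (\<phi> g) \<otimes>\<^bsub>G\<^esub> fst (snd (\<phi> g)) \<otimes>\<^bsub>G\<^esub> snd (snd (\<phi> g))"
        by (rule bchoice)
      then obtain \<phi> where \<phi>all: "\<forall>g\<in>carrier G. fst (\<phi> g) \<in> C \<and> fst (snd (\<phi> g)) \<in> A \<and> snd (snd (\<phi> g)) \<in> C \<and>
               g = fst (\<phi> g) \<otimes>\<^bsub>G\<^esub> fst (snd (\<phi> g)) \<otimes>\<^bsub>G\<^esub> snd (snd (\<phi> g))"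
        by (elim exE)
      have \<phi>: "\<And>g. g \<in> carrier G \<Longrightarrow> fst (\<phi> g) \<in> C \<and> fst (snd (\<phi> g)) \<in> A \<and> snd (snd (\<phi> g)) \<in> C \<and>
               g = fst (\<phi> g) \<otimes>\<^bsub>G\<^esub> fst (snd (\<phi> g)) \<otimes>\<^bsub>G\<^esub> snd (snd (\<phi> g))"
        using \<phi>all by (elim ballE) auto
      define cf where "cf g = fst (\<phi> g)" for g
      define af where "af g = fst (snd (\<phi> g))" for g
      define df where "df g = snd (snd (\<phi> g))" for g
      have dcp: "\<And>g. g \<in> carrier G \<Longrightarrow> cf g \<in> C \<and> af g \<in> A \<and> df g \<in> C \<and> g = cf g \<otimes>\<^bsub>G\<^esub> af g \<otimes>\<^bsub>G\<^esub> df g"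
        using \<phi> unfolding cf_def af_def df_def by blast
      have CC: "compactin (prod_topology \<tau> \<tau>) (C \<times> C)" by (simp add: compactin_Times C)
      have "eventually (\<lambda>g. (cf g, df g) \<in> C \<times> C) F0"
        using F0car by (rule eventually_mono) (use dcp in auto)
      from cluster_subnet[OF CC F0ne this] obtain p H where
        p: "p \<in> C \<times> C" and H: "H \<noteq> bot" "H \<le> F0"
        and Hl: "limitin (prod_topology \<tau> \<tau>) (\<lambda>g. (cf g, df g)) p H" by auto
      obtain c0 d0 where p0: "p = (c0, d0)" by (cases p)
      have lc: "limitin \<tau>' cf c0 H" and ld: "limitin \<tau>' df d0 H"
        using Hl p0 coarse by (auto simp: limitin_pairwise o_def)
      have lx: "limitin \<tau>' (\<lambda>g. g) x H" using limitin_mono_filter[OF H(2) F0lim] .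
      define h where "h = inv\<^bsub>G\<^esub> c0 \<otimes>\<^bsub>G\<^esub> x \<otimes>\<^bsub>G\<^esub> inv\<^bsub>G\<^esub> d0"
      have L: "limitin \<tau>' (\<lambda>g. inv\<^bsub>G\<^esub> (cf g) \<otimes>\<^bsub>G\<^esub> g \<otimes>\<^bsub>G\<^esub> inv\<^bsub>G\<^esub> (df g)) h H"
        unfolding h_def
        by (intro limitin_mult[OF assms(2)] limitin_inv[OF assms(2)] lc ld lx)
      have Hcar: "eventually (\<lambda>g. g \<in> carrier G) H" using filter_leD[OF H(2) F0car] .
      have "eventually (\<lambda>g. inv\<^bsub>G\<^esub> (cf g) \<otimes>\<^bsub>G\<^esub> g \<otimes>\<^bsub>G\<^esub> inv\<^bsub>G\<^esub> (df g) = af g) H"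
        using Hcar
      proof (rule eventually_mono)
        fix g assume g: "g \<in> carrier G"
        have "cf g \<in> carrier G" "af g \<in> carrier G" "df g \<in> carrier G" using dcp[OF g] AG CG by auto
        then have "inv\<^bsub>G\<^esub> (cf g) \<otimes>\<^bsub>G\<^esub> (cf g \<otimes>\<^bsub>G\<^esub> af g \<otimes>\<^bsub>G\<^esub> df g) \<otimes>\<^bsub>G\<^esub> inv\<^bsub>G\<^esub> (df g) = af g"
          by (rule grp_alg1[OF grp])
        then show "inv\<^bsub>G\<^esub> (cf g) \<otimes>\<^bsub>G\<^esub> g \<otimes>\<^bsub>G\<^esub> inv\<^bsub>G\<^esub> (df g) = af g"
          using dcp[OF g] by simp
      qed
      then have limaf: "limitin \<tau>' af h H" using L by (rule limitin_transform_eventually)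
      define FA where "FA = filtermap af H"
      have netA: "net_in A FA"
        unfolding net_in_def FA_def using H(1)
        by (simp add: eventually_filtermap filtermap_bot_iff eventually_mono[OF Hcar] dcp)
      have tinf: "tends_to_infinity \<tau> FA"
        unfolding tends_to_infinity_def
      proof (intro allI impI)
        fix K assume K: "compactin \<tau> K"
        define M1 where "M1 = (\<lambda>p. fst p \<otimes>\<^bsub>G\<^esub> snd p) ` (C \<times> K)"
        define K' where "K' = (\<lambda>p. fst p \<otimes>\<^bsub>G\<^esub> snd p) ` (M1 \<times> C)"
        have "compactin \<tau> M1" unfolding M1_def
          by (rule image_compactin[OF _ multc]) (simp add: compactin_Times C K)
        then have "compactin \<tau> K'" unfolding K'_def
          by (intro image_compactin[OF _ multc]) (simp add: compactin_Times C)
        then have "eventually (\<lambda>g. g \<notin> K') H" using filter_leD[OF H(2) inf] by blast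
        then have "eventually (\<lambda>g. af g \<notin> K) H"
        proof (rule eventually_elim2[OF _ Hcar])
          fix g assume gK: "g \<notin> K'" and g: "g \<in> carrier G"
          show "af g \<notin> K"
          proof
            assume "af g \<in> K"
            then have "cf g \<otimes>\<^bsub>G\<^esub> af g \<in> M1" unfolding M1_def using dcp[OF g]
              by (intro image_eqI[of _ _ "(cf g, af g)"]) auto
            then have "g \<in> K'" unfolding K'_def using dcp[OF g]
              by (intro image_eqI[of _ _ "(cf g \<otimes>\<^bsub>G\<^esub> af g, df g)"]) auto
            then show False using gK by simp
          qed
        qed
        then show "eventually (\<lambda>x. x \<notin> K) FA" unfolding FA_def eventually_filtermap .
      qed
      have "net_in A FA \<and> tends_to_infinity \<tau> FA" using netA tinf by (rule conjI)
      then have "\<exists>F'. subnet F' FA \<and> \<not> precompact \<tau> (U_plus G \<tau> F')"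
        using qss by (elim allE impE)
      then obtain F'' where F'': "subnet F'' FA" and np: "\<not> precompact \<tau> (U_plus G \<tau> F'')"
        by (elim exE conjE)
      have F''ne: "F'' \<noteq> bot" and F''le: "F'' \<le> FA" using F'' unfolding subnet_def by auto
      have "limitin \<tau>' (\<lambda>a. a) h FA"
        using limaf unfolding FA_def limitin_def eventually_filtermap by simp
      then have lh: "limitin \<tau>' (\<lambda>a. a) h F''" by (rule limitin_mono_filter[OF F''le])
      have hG: "h \<in> carrier G" using limitin_topspace[OF lh] ts' by simp
      have Usub: "U_plus G \<tau> F'' \<subseteq> {\<one>\<^bsub>G\<^esub>}"
      proof
        fix y assume "y \<in> U_plus G \<tau> F''"
        then have yG: "y \<in> carrier G" and yl: "limitin \<tau> (\<lambda>g. inv\<^bsub>G\<^esub> g \<otimes>\<^bsub>G\<^esub> y \<otimes>\<^bsub>G\<^esub> g) \<one>\<^bsub>G\<^esub> F''"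
          unfolding U_plus_def by auto
        have l1: "limitin \<tau>' (\<lambda>g. inv\<^bsub>G\<^esub> g \<otimes>\<^bsub>G\<^esub> y \<otimes>\<^bsub>G\<^esub> g) \<one>\<^bsub>G\<^esub> F''" using coarse[OF yl] .
        have cy: "limitin \<tau>' (\<lambda>g. y) y F''" using yG ts' by simp
        have l2: "limitin \<tau>' (\<lambda>g. inv\<^bsub>G\<^esub> g \<otimes>\<^bsub>G\<^esub> y \<otimes>\<^bsub>G\<^esub> g) (inv\<^bsub>G\<^esub> h \<otimes>\<^bsub>G\<^esub> y \<otimes>\<^bsub>G\<^esub> h) F''"
          by (rule limitin_mult[OF assms(2) limitin_mult[OF assms(2) limitin_inv[OF assms(2) lh] cy] lh])
        have "inv\<^bsub>G\<^esub> h \<otimes>\<^bsub>G\<^esub> y \<otimes>\<^bsub>G\<^esub> h = \<one>\<^bsub>G\<^esub>"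
          by (rule limitin_Hausdorff_unique[OF l2 l1 F''ne assms(3)])
        then have "y = \<one>\<^bsub>G\<^esub>" by (rule grp_alg2[OF grp hG yG])
        then show "y \<in> {\<one>\<^bsub>G\<^esub>}" by simp
      qed
      have oneT: "\<one>\<^bsub>G\<^esub> \<in> topspace \<tau>" using ts by simp
      have "\<tau> closure_of (U_plus G \<tau> F'') \<subseteq> \<tau> closure_of {\<one>\<^bsub>G\<^esub>}"
        using Usub by (rule closure_of_mono)
      also have "\<dots> = {\<one>\<^bsub>G\<^esub>}"
        using closure_of_closedin closedin_Hausdorff_singleton[OF Haus oneT] by blast
      finally have cl1: "\<tau> closure_of (U_plus G \<tau> F'') \<subseteq> {\<one>\<^bsub>G\<^esub>}" .
      have "compactin \<tau> (\<tau> closure_of (U_plus G \<tau> F''))"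
      proof -
        have "\<tau> closure_of (U_plus G \<tau> F'') = {} \<or> \<tau> closure_of (U_plus G \<tau> F'') = {\<one>\<^bsub>G\<^esub>}"
          using cl1 by (simp add: subset_singleton_iff)
        then show ?thesis using oneT by auto
      qed
      then show False using np unfolding precompact_def by simp
    qed
  qed
qed

end
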